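(* Let $\Lambda_{TU}=\{(F(x),\Lambda_x,v(x))\}_{x\in X}$ and $\Gamma_{TU}=\{(G(x),\Gamma_x,v(x))\}_{x\in X}$ be continuous $(T,U)$-controlled $g$-fusion frames for $H$ with bounds $A_1,B_1$ and $A_2,B_2$ and frame operators $S_C$ and $S_{C'}$ respectively, and assume $S_C^{-1}$ and $S_{C'}^{-1}$ each commute with both $T$ and $U$. Let $\Delta_{TU}=\{(X(x),\Delta_x,v(x))\}_{x\in X}$ with $X(x)=S_C^{-1}F(x)$, $\Delta_x=\Lambda_xP_{F(x)}S_C^{-1}$, and $\Theta_{TU}=\{(Y(x),\Theta_x,v(x))\}_{x\in X}$ with $Y(x)=S_{C'}^{-1}G(x)$, $\Theta_x=\Gamma_xP_{G(x)}S_{C'}^{-1}$, be their canonical duals. If there is $D>0$ such that for every $f\in H$ $$\Big|\int_X v(x)^2\big(\langle\Lambda_xP_{F(x)}Uf,\Lambda_xP_{F(x)}Tf\rangle-\langle\Gamma_xP_{G(x)}Uf,\Gamma_xP_{G(x)}Tf\rangle\big)\,d\mu(x)\Big|\le D\|f\|^2,$$ then for every $f\in H$ $$\Big|\int_X v(x)^2\big(\langle\Delta_xP_{X(x)}Uf,\Delta_xP_{X(x)}Tf\rangle-\langle\Theta_xP_{Y(x)}Uf,\Theta_xP_{Y(x)}Tf\rangle\big)\,d\mu(x)\Big|\le\frac{D}{A_1A_2}\|f\|^2.$$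
   Context: $H$ is a separable complex Hilbert space, $\mathcal{B}(H)$ the bounded operators on $H$, $\mathcal{GB}^+(H)$ the positive bounded operators on $H$ with bounded inverse, $P_M$ the orthogonal projection onto a closed subspace $M$. Let $(X,\mu)$ be a measure space, $\{K_x\}_{x\in X}$ Hilbert spaces, $v:X\to\mathbb{R}^+$ measurable, $F,G$ maps from $X$ to closed subspaces of $H$ with $x\mapsto P_{F(x)}f$, $x\mapsto P_{G(x)}f$ weakly measurable for all $f$, $\Lambda_x\in\mathcal{B}(F(x),K_x)$, $\Gamma_x\in\mathcal{B}(G(x),K_x)$, and $T,U\in\mathcal{GB}^+(H)$. A family $\{(F(x),\Lambda_x,v(x))\}$ is a continuous $(T,U)$-controlled $g$-fusion frame for $H$ with bounds $0<A\le B<\infty$ if $A\|f\|^2\le\int_X v(x)^2\langle\Lambda_xP_{F(x)}Uf,\Lambda_xP_{F(x)}Tf\rangle d\mu(x)\le B\|f\|^2$ for all $f\in H$. Its frame operator $S_C\in\mathcal{B}(H)$ is given by $\langle S_Cf,g\rangle=\int_X v(x)^2\langle T^*P_{F(x)}\Lambda_x^*\Lambda_xP_{F(x)}Uf,g\rangle d\mu(x)$; it satisfies $AI_H\le S_C\le BI_H$. The canonical dual of such a frame (when $S_C^{-1}$ commutes with $T$ and $U$) is the family $\{(S_C^{-1}F(x),\Lambda_xP_{F(x)}S_C^{-1},v(x))\}_{x\in X}$, the operator being restricted to $S_C^{-1}F(x)$. *)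

theory Defs
  imports "HOL-Analysis.Analysis"
begin

class complex_hilbert = banach +
  fixes scaleC :: "complex \<Rightarrow> 'a \<Rightarrow> 'a"
    and cinner :: "'a \<Rightarrow> 'a \<Rightarrow> complex"
  assumes scaleC_add_right: "scaleC c (x + y) = scaleC c x + scaleC c y"
    and scaleC_add_left: "scaleC (b + c) x = scaleC b x + scaleC c x"
    and scaleC_scaleC: "scaleC b (scaleC c x) = scaleC (b * c) x"
    and scaleC_one: "scaleC 1 x = x"
    and scaleC_of_real: "scaleC (complex_of_real r) x = scaleR r x"
    and cinner_add_left: "cinner (x + y) z = cinner x z + cinner y z"
    and cinner_scaleC_left: "cinner (scaleC c x) y = c * cinner x y"
    and cinner_commute: "cinner y x = cnj (cinner x y)"
    and cinner_self_real: "Im (cinner x x) = 0"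
    and cinner_self_nonneg: "0 \<le> Re (cinner x x)"
    and cinner_self_eq_0: "cinner x x = 0 \<longleftrightarrow> x = 0"
    and norm_eq_sqrt_cinner: "norm x = sqrt (Re (cinner x x))"

definition clinear :: "('a::complex_hilbert \<Rightarrow> 'b::complex_hilbert) \<Rightarrow> bool" where
  "clinear L \<longleftrightarrow> (\<forall>x y. L (x + y) = L x + L y) \<and> (\<forall>c x. L (scaleC c x) = scaleC c (L x))"

definition bounded_clinear :: "('a::complex_hilbert \<Rightarrow> 'b::complex_hilbert) \<Rightarrow> bool" where
  "bounded_clinear L \<longleftrightarrow> clinear L \<and> (\<exists>K. \<forall>x. norm (L x) \<le> norm x * K)"

text \<open>Bounded linear operator defined on a closed subspace \<open>M\<close> (only its values on \<open>M\<close> matter).\<close>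
definition bounded_clinear_on :: "'a::complex_hilbert set \<Rightarrow> ('a \<Rightarrow> 'b::complex_hilbert) \<Rightarrow> bool" where
  "bounded_clinear_on M L \<longleftrightarrow>
     (\<forall>x\<in>M. \<forall>y\<in>M. L (x + y) = L x + L y) \<and> (\<forall>c. \<forall>x\<in>M. L (scaleC c x) = scaleC c (L x)) \<and>
     (\<exists>K. \<forall>x\<in>M. norm (L x) \<le> norm x * K)"

definition closed_csubspace :: "'a::complex_hilbert set \<Rightarrow> bool" where
  "closed_csubspace M \<longleftrightarrow> closed M \<and> 0 \<in> M \<and> (\<forall>x\<in>M. \<forall>y\<in>M. x + y \<in> M) \<and>
     (\<forall>c. \<forall>x\<in>M. scaleC c x \<in> M)"

definition proj :: "'a::complex_hilbert set \<Rightarrow> 'a \<Rightarrow> 'a" where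
  "proj M f = (THE y. y \<in> M \<and> (\<forall>m\<in>M. cinner (f - y) m = 0))"

definition positive_op :: "('a::complex_hilbert \<Rightarrow> 'a) \<Rightarrow> bool" where
  "positive_op T \<longleftrightarrow> (\<forall>f. Im (cinner (T f) f) = 0 \<and> 0 \<le> Re (cinner (T f) f))"

definition GBplus :: "('a::complex_hilbert \<Rightarrow> 'a) \<Rightarrow> bool" where
  "GBplus T \<longleftrightarrow> bounded_clinear T \<and> positive_op T \<and> bij T \<and> bounded_clinear (inv T)"

definition separable_space :: "'a::complex_hilbert itself \<Rightarrow> bool" where
  "separable_space _ \<longleftrightarrow> (\<exists>D::'a set. countable D \<and> closure D = UNIV)"

definition gfusion_family ::
  "'x measure \<Rightarrow> ('x \<Rightarrow> real) \<Rightarrow> ('x \<Rightarrow> 'h::complex_hilbert set) \<Rightarrow> ('x \<Rightarrow> 'h \<Rightarrow> 'k::complex_hilbert) \<Rightarrow> bool"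
  where
  "gfusion_family M v F \<Lambda> \<longleftrightarrow>
     v \<in> borel_measurable M \<and> (\<forall>x\<in>space M. 0 < v x) \<and>
     (\<forall>x\<in>space M. closed_csubspace (F x)) \<and>
     (\<forall>f g. (\<lambda>x. cinner (proj (F x) f) g) \<in> borel_measurable M) \<and>
     (\<forall>x\<in>space M. bounded_clinear_on (F x) (\<Lambda> x))"

definition ctrl_gfusion_frame ::
  "'x measure \<Rightarrow> ('x \<Rightarrow> real) \<Rightarrow> ('x \<Rightarrow> 'h::complex_hilbert set) \<Rightarrow> ('x \<Rightarrow> 'h \<Rightarrow> 'k::complex_hilbert)
     \<Rightarrow> ('h \<Rightarrow> 'h) \<Rightarrow> ('h \<Rightarrow> 'h) \<Rightarrow> real \<Rightarrow> real \<Rightarrow> bool" where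
  "ctrl_gfusion_frame M v F \<Lambda> T U A B \<longleftrightarrow>
     0 < A \<and> A \<le> B \<and>
     (\<forall>f. let I = (\<lambda>x. complex_of_real ((v x)\<^sup>2) *
                        cinner (\<Lambda> x (proj (F x) (U f))) (\<Lambda> x (proj (F x) (T f))))
          in integrable M I \<and> Im (integral\<^sup>L M I) = 0 \<and>
             A * (norm f)\<^sup>2 \<le> Re (integral\<^sup>L M I) \<and> Re (integral\<^sup>L M I) \<le> B * (norm f)\<^sup>2)"

text \<open>Frame operator \<open>S_C\<close>: \<open>\<langle>S_C f, g\<rangle> = \<integral> v(x)\<^sup>2 \<langle>T\<^sup>* P_{F(x)} \<Lambda>_x\<^sup>* \<Lambda>_x P_{F(x)} U f, g\<rangle> d\<mu>(x)\<close>;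
  the integrand is written out as \<open>\<langle>\<Lambda>_x P_{F(x)} U f, \<Lambda>_x P_{F(x)} T g\<rangle>\<close>.\<close>
definition ctrl_frame_operator ::
  "'x measure \<Rightarrow> ('x \<Rightarrow> real) \<Rightarrow> ('x \<Rightarrow> 'h::complex_hilbert set) \<Rightarrow> ('x \<Rightarrow> 'h \<Rightarrow> 'k::complex_hilbert)
     \<Rightarrow> ('h \<Rightarrow> 'h) \<Rightarrow> ('h \<Rightarrow> 'h) \<Rightarrow> ('h \<Rightarrow> 'h) \<Rightarrow> bool" where
  "ctrl_frame_operator M v F \<Lambda> T U S \<longleftrightarrow>
     bounded_clinear S \<and>
     (\<forall>f g. cinner (S f) g =
        (LINT x|M. complex_of_real ((v x)\<^sup>2) *
           cinner (\<Lambda> x (proj (F x) (U f))) (\<Lambda> x (proj (F x) (T g)))))"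

end

theory Submission
  imports Defs
begin

lemma cplx_opt:
  fixes zz c :: complex and n :: real assumes n: "n > 0"
  shows "zz - cnj (c / of_real n) * c - (c / of_real n) * cnj c + (c / of_real n) * cnj (c / of_real n) * of_real n
     = zz - of_real ((cmod c)\<^sup>2 / n)"
proof -
  have cc: "c * cnj c = of_real ((cmod c)\<^sup>2)" by (rule complex_norm_square[symmetric])
  have n0: "complex_of_real n \<noteq> 0" using n by simp
  have "cnj (c / of_real n) * c = (c * cnj c) / of_real n" by (simp add: mult.commute)
  moreover have "(c / of_real n) * cnj c = (c * cnj c) / of_real n" by simp
  moreover have "(c / of_real n) * cnj (c / of_real n) * of_real n = (c * cnj c) / of_real n"
    using n0 by (simp add: power2_eq_square)
  moreover have k: "(c * cnj c) / of_real n = of_real ((cmod c)\<^sup>2 / n)" unfolding cc by simp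
  ultimately show ?thesis by (simp only: k) simp
qed

lemma cplx_aux2: "(a::complex) - s * b - (t * c - s * (t * e)) = a - s * b - t * c + t * s * e"
  by (simp add: algebra_simps)

lemma cplx_aux: "(a::complex) + b = 0 \<Longrightarrow> b = - a" by (simp add: add_eq_0_iff)

context complex_hilbert begin

lemma cinner_zero_left[simp]: "cinner 0 y = 0"
  using cinner_add_left[of 0 0 y] by simp

lemma cinner_zero_right[simp]: "cinner x 0 = 0"
  using cinner_commute[of x 0] by simp

lemma cinner_add_right: "cinner x (y + z) = cinner x y + cinner x z"
proof -
  have "cinner x (y + z) = cnj (cinner (y + z) x)" by (rule cinner_commute)
  also have "\<dots> = cnj (cinner y x) + cnj (cinner z x)" by (simp only: cinner_add_left complex_cnj_add)
  also have "\<dots> = cinner x y + cinner x z" by (simp only: cinner_commute[of x y] cinner_commute[of x z])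
  finally show ?thesis .
qed

lemma cinner_minus_left: "cinner (- x) y = - cinner x y"
proof -
  have "cinner x y + cinner (-x) y = 0" using cinner_add_left[of x "-x" y] by simp
  then show ?thesis by (rule cplx_aux)
qed

lemma cinner_minus_right: "cinner x (- y) = - cinner x y"
proof -
  have "cinner x (- y) = cnj (cinner (- y) x)" by (rule cinner_commute)
  also have "\<dots> = - cnj (cinner y x)" by (simp only: cinner_minus_left complex_cnj_minus)
  also have "\<dots> = - cinner x y" by (simp only: cinner_commute[of x y])
  finally show ?thesis .
qed

lemma cinner_diff_left: "cinner (x - y) z = cinner x z - cinner y z"
  unfolding diff_conv_add_uminus[of x y] cinner_add_left cinner_minus_left by simp

lemma cinner_diff_right: "cinner x (y - z) = cinner x y - cinner x z"
  unfolding diff_conv_add_uminus[of y z] cinner_add_right cinner_minus_right by simp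

lemma cinner_scaleC_right: "cinner x (scaleC c y) = cnj c * cinner x y"
proof -
  have "cinner x (scaleC c y) = cnj (cinner (scaleC c y) x)" by (rule cinner_commute)
  also have "\<dots> = cnj c * cnj (cinner y x)" by (simp only: cinner_scaleC_left complex_cnj_mult)
  also have "\<dots> = cnj c * cinner x y" by (simp only: cinner_commute[of x y])
  finally show ?thesis .
qed

lemma cinner_scaleR_left: "cinner (r *\<^sub>R x) y = of_real r * cinner x y"
  unfolding scaleC_of_real[symmetric] by (rule cinner_scaleC_left)

lemma cinner_scaleR_right: "cinner x (r *\<^sub>R y) = of_real r * cinner x y"
  unfolding scaleC_of_real[symmetric] cinner_scaleC_right by simp

lemma norm_sq_cinner: "(norm x)\<^sup>2 = Re (cinner x x)"
  by (simp add: norm_eq_sqrt_cinner cinner_self_nonneg)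

lemma cinner_self_norm: "cinner x x = complex_of_real ((norm x)\<^sup>2)"
  by (simp add: norm_sq_cinner complex_eq_iff cinner_self_real)


lemma cinner_expand: "cinner (z - scaleC t m) (z - scaleC t m) =
   cinner z z - cnj t * cinner z m - t * cinner m z + t * cnj t * cinner m m"
proof -
  have "cinner (z - scaleC t m) (z - scaleC t m) = cinner z (z - scaleC t m) - cinner (scaleC t m) (z - scaleC t m)"
    by (rule cinner_diff_left)
  also have "\<dots> = (cinner z z - cnj t * cinner z m) - (t * cinner m z - cnj t * (t * cinner m m))"
    by (simp only: cinner_diff_right cinner_scaleC_left cinner_scaleC_right)
  also have "\<dots> = cinner z z - cnj t * cinner z m - t * cinner m z + t * cnj t * cinner m m"
    by (rule cplx_aux2)
  finally show ?thesis .
qed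

lemma opt_step:
  assumes "m \<noteq> 0"
  shows "Re (cinner (z - scaleC (cinner z m / cinner m m) m) (z - scaleC (cinner z m / cinner m m) m))
     = (norm z)\<^sup>2 - (cmod (cinner z m))\<^sup>2 / (norm m)\<^sup>2"
proof -
  define c where "c = cinner z m"
  define n where "n = (norm m)\<^sup>2"
  have n: "n > 0" using assms by (simp add: n_def)
  have mm: "cinner m m = of_real n" unfolding n_def by (rule cinner_self_norm)
  have mz: "cinner m z = cnj c" unfolding c_def by (rule cinner_commute)
  have e: "cinner (z - scaleC (c / of_real n) m) (z - scaleC (c / of_real n) m)
      = cinner z z - of_real ((cmod c)\<^sup>2 / n)"
    unfolding cinner_expand mm mz c_def[symmetric] by (rule cplx_opt[OF n])
  show ?thesis unfolding c_def[symmetric] mm n_def[symmetric] e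
    by (simp add: norm_sq_cinner)
qed

lemma cauchy_schwarz: "cmod (cinner x y) \<le> norm x * norm y"
proof (cases "y = 0")
  case True then show ?thesis by simp
next
  case False
  have "0 \<le> Re (cinner (x - scaleC (cinner x y / cinner y y) y) (x - scaleC (cinner x y / cinner y y) y))"
    by (rule cinner_self_nonneg)
  then have "(cmod (cinner x y))\<^sup>2 / (norm y)\<^sup>2 \<le> (norm x)\<^sup>2" using opt_step[OF False] by simp
  then have "(cmod (cinner x y))\<^sup>2 \<le> (norm x * norm y)\<^sup>2" using False
    by (simp add: divide_le_eq power_mult_distrib)
  then show ?thesis by (simp add: power2_le_iff_abs_le)
qed

lemma parallelogram: "(norm (a + b))\<^sup>2 + (norm (a - b))\<^sup>2 = 2 * (norm a)\<^sup>2 + 2 * (norm b)\<^sup>2"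
  by (simp add: norm_sq_cinner cinner_add_left cinner_add_right cinner_diff_left cinner_diff_right)

end

lemma csub_add: "closed_csubspace M \<Longrightarrow> x \<in> M \<Longrightarrow> y \<in> M \<Longrightarrow> x + y \<in> M"
  by (simp add: closed_csubspace_def)
lemma csub_scaleC: "closed_csubspace M \<Longrightarrow> x \<in> M \<Longrightarrow> scaleC c x \<in> M"
  by (simp add: closed_csubspace_def)
lemma csub_scaleR: "closed_csubspace M \<Longrightarrow> x \<in> M \<Longrightarrow> r *\<^sub>R x \<in> M"
  unfolding scaleC_of_real[symmetric] by (rule csub_scaleC)
lemma csub_minus: "closed_csubspace M \<Longrightarrow> x \<in> M \<Longrightarrow> - x \<in> M"
  using csub_scaleR[of M x "-1"] by simp
lemma csub_diff: "closed_csubspace M \<Longrightarrow> x \<in> M \<Longrightarrow> y \<in> M \<Longrightarrow> x - y \<in> M"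
  unfolding diff_conv_add_uminus by (intro csub_add csub_minus)

lemma proj_minimizer:
  fixes M :: "'a::complex_hilbert set"
  assumes M: "closed_csubspace M"
  shows "\<exists>y\<in>M. \<forall>m\<in>M. (norm (f - y))\<^sup>2 \<le> (norm (f - m))\<^sup>2"
proof -
  define d2 where "d2 = Inf ((\<lambda>m. (norm (f - m))\<^sup>2) ` M)"
  have M0: "0 \<in> M" using M by (simp add: closed_csubspace_def)
  have bdd: "bdd_below ((\<lambda>m. (norm (f - m))\<^sup>2) ` M)"
    by (rule bdd_belowI[of _ 0]) auto
  have lower: "d2 \<le> (norm (f - m))\<^sup>2" if "m \<in> M" for m
    unfolding d2_def using bdd that by (simp add: cInf_lower)
  have "\<exists>m\<in>M. (norm (f - m))\<^sup>2 < d2 + 1 / real (Suc n)" for n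
  proof -
    have "Inf ((\<lambda>m. (norm (f - m))\<^sup>2) ` M) < d2 + 1 / real (Suc n)"
      unfolding d2_def[symmetric] by simp
    from cInf_lessD[OF _ this] M0 show ?thesis by auto
  qed
  then obtain s where s: "\<And>n. s n \<in> M" "\<And>n. (norm (f - s n))\<^sup>2 < d2 + 1 / real (Suc n)"
    by metis
  have bound: "(norm (s n - s k))\<^sup>2 \<le> 2 / real (Suc n) + 2 / real (Suc k)" for n k
  proof -
    define mid where "mid = (1/2) *\<^sub>R (s n + s k)"
    have "mid \<in> M" unfolding mid_def by (intro csub_scaleR csub_add M s)
    then have "d2 \<le> (norm (f - mid))\<^sup>2" by (rule lower)
    moreover have e1: "(f - s n) + (f - s k) = 2 *\<^sub>R (f - mid)"
      unfolding mid_def by (simp add: scaleR_right_diff_distrib scaleR_2)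
    have "(norm ((f - s n) + (f - s k)))\<^sup>2 = 4 * (norm (f - mid))\<^sup>2"
      unfolding e1 by (simp add: power2_eq_square)
    moreover have q1: "(f - s n) - (f - s k) = s k - s n" by simp
    have q2: "norm (s k - s n) = norm (s n - s k)" by (rule norm_minus_commute)
    have "(norm ((f - s n) + (f - s k)))\<^sup>2 + (norm (s n - s k))\<^sup>2
          = 2 * (norm (f - s n))\<^sup>2 + 2 * (norm (f - s k))\<^sup>2"
      using parallelogram[of "f - s n" "f - s k"] unfolding q1 q2 .
    moreover note s(2)[of n] s(2)[of k]
    ultimately show ?thesis by linarith
  qed
  have "Cauchy s"
  proof (rule CauchyI)
    fix e :: real assume e: "0 < e"
    obtain N where N: "inverse (real (Suc N)) < e\<^sup>2 / 4"
      using reals_Archimedean[of "e\<^sup>2/4"] e by auto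
    show "\<exists>N. \<forall>m\<ge>N. \<forall>n\<ge>N. norm (s m - s n) < e"
    proof (intro exI allI impI)
      fix m n assume mn: "N \<le> m" "N \<le> n"
      have "2 / real (Suc m) \<le> 2 / real (Suc N)" "2 / real (Suc n) \<le> 2 / real (Suc N)"
        using mn by (simp_all add: frac_le)
      moreover have "4 / real (Suc N) < e\<^sup>2" using N by (simp add: inverse_eq_divide field_simps)
      ultimately have "(norm (s m - s n))\<^sup>2 < e\<^sup>2"
        using bound[of m n] by linarith
      then show "norm (s m - s n) < e" using e by (simp add: power_less_imp_less_base)
    qed
  qed
  then obtain y where y: "s \<longlonglongrightarrow> y" using Cauchy_convergent_iff convergent_def by blast
  have yM: "y \<in> M"
    using closed_sequentially[OF _ s(1) y] M by (simp add: closed_csubspace_def)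
  have t1: "(\<lambda>n. (norm (f - s n))\<^sup>2) \<longlonglongrightarrow> (norm (f - y))\<^sup>2"
    by (intro tendsto_intros y)
  have t2: "(\<lambda>n. d2 + inverse (real (Suc n))) \<longlonglongrightarrow> d2 + 0"
    by (intro tendsto_intros LIMSEQ_inverse_real_of_nat)
  have yd: "(norm (f - y))\<^sup>2 \<le> d2"
    using tendsto_le[OF _ t2 t1] s(2) by (simp add: less_imp_le inverse_eq_divide)
  have "\<forall>m\<in>M. (norm (f - y))\<^sup>2 \<le> (norm (f - m))\<^sup>2"
  proof
    fix m assume "m \<in> M"
    then show "(norm (f - y))\<^sup>2 \<le> (norm (f - m))\<^sup>2" using lower[of m] yd by linarith
  qed
  then show ?thesis using yM by blast
qed

lemma proj_exists:
  fixes M :: "'a::complex_hilbert set"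
  assumes M: "closed_csubspace M"
  shows "\<exists>y\<in>M. \<forall>m\<in>M. cinner (f - y) m = 0"
proof -
  obtain y where yM: "y \<in> M" and ymin: "\<forall>m\<in>M. (norm (f - y))\<^sup>2 \<le> (norm (f - m))\<^sup>2"
    using proj_minimizer[OF M] by blast
  have "cinner (f - y) m = 0" if m: "m \<in> M" for m
  proof (cases "m = 0")
    case True then show ?thesis by simp
  next
    case False
    define z where "z = f - y"
    define t where "t = cinner z m / cinner m m"
    have "y + scaleC t m \<in> M" by (intro csub_add csub_scaleC M yM m)
    then have "(norm z)\<^sup>2 \<le> (norm (f - (y + scaleC t m)))\<^sup>2" using ymin z_def by blast
    also have "f - (y + scaleC t m) = z - scaleC t m" by (simp add: z_def)
    also have "(norm (z - scaleC t m))\<^sup>2 = (norm z)\<^sup>2 - (cmod (cinner z m))\<^sup>2 / (norm m)\<^sup>2"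
      unfolding norm_sq_cinner[of "z - scaleC t m"] t_def using opt_step[OF False] by (simp add: norm_sq_cinner)
    finally have "(cmod (cinner z m))\<^sup>2 / (norm m)\<^sup>2 \<le> 0" by simp
    then have "(cmod (cinner z m))\<^sup>2 \<le> 0" using False by (simp add: divide_le_0_iff)
    then show ?thesis by (simp add: z_def)
  qed
  then show ?thesis using yM by blast
qed

lemma proj_eqI:
  fixes M :: "'a::complex_hilbert set"
  assumes M: "closed_csubspace M" and y: "y \<in> M" "\<forall>m\<in>M. cinner (f - y) m = 0"
  shows "proj M f = y"
  unfolding proj_def
proof (rule the_equality)
  show "y \<in> M \<and> (\<forall>m\<in>M. cinner (f - y) m = 0)" using y by blast
next
  fix y' assume y': "y' \<in> M \<and> (\<forall>m\<in>M. cinner (f - y') m = 0)"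
  have d: "y' - y \<in> M" using y y' M by (simp add: csub_diff)
  have "cinner (y' - y) (y' - y) = cinner (f - y) (y' - y) - cinner (f - y') (y' - y)"
    by (simp add: cinner_diff_left[symmetric])
  also have "\<dots> = 0" using y y' d by simp
  finally show "y' = y" by (simp add: cinner_self_eq_0)
qed

lemma proj_props:
  fixes M :: "'a::complex_hilbert set"
  assumes M: "closed_csubspace M"
  shows "proj M f \<in> M" "\<forall>m\<in>M. cinner (f - proj M f) m = 0"
  using proj_exists[OF M, of f] proj_eqI[OF M] by metis+

definition posop :: "('a::complex_hilbert \<Rightarrow> 'a) \<Rightarrow> real \<Rightarrow> bool" where
  "posop S A \<longleftrightarrow> bounded_clinear S \<and> 0 < A \<and> (\<forall>f. Im (cinner (S f) f) = 0) \<and>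
     (\<forall>f. A * (norm f)\<^sup>2 \<le> Re (cinner (S f) f))"

lemma bcl_add: "bounded_clinear S \<Longrightarrow> S (x + y) = S x + S y"
  by (simp add: bounded_clinear_def clinear_def)
lemma bcl_scaleC: "bounded_clinear S \<Longrightarrow> S (scaleC c x) = scaleC c (S x)"
  by (simp add: bounded_clinear_def clinear_def)
lemma bcl_bounded_linear:
  assumes "bounded_clinear S" shows "bounded_linear S"
proof -
  obtain K where K: "\<forall>x. norm (S x) \<le> norm x * K" using assms by (auto simp: bounded_clinear_def)
  show ?thesis
  proof (rule bounded_linear_intro[of _ K])
    show "S (x + y) = S x + S y" for x y using assms by (rule bcl_add)
    show "S (r *\<^sub>R x) = r *\<^sub>R S x" for r x
      using bcl_scaleC[OF assms, of "complex_of_real r" x] by (simp add: scaleC_of_real)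
    show "norm (S x) \<le> norm x * K" for x using K by blast
  qed
qed

context
  fixes S :: "'a::complex_hilbert \<Rightarrow> 'a" and A :: real
  assumes P: "posop S A"
begin

lemma P_bcl: "bounded_clinear S" using P by (simp add: posop_def)
lemma P_bl: "bounded_linear S" by (rule bcl_bounded_linear[OF P_bcl])
lemma P_A: "0 < A" using P by (simp add: posop_def)
lemma P_Im: "Im (cinner (S f) f) = 0" using P by (simp add: posop_def)
lemma P_low: "A * (norm f)\<^sup>2 \<le> Re (cinner (S f) f)" using P by (simp add: posop_def)

lemma P_below: "A * norm x \<le> norm (S x)"
proof (cases "x = 0")
  case True then show ?thesis by (simp add: linear_simps(3)[OF P_bl])
next
  case False
  have "A * (norm x)\<^sup>2 \<le> Re (cinner (S x) x)" by (rule P_low)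
  also have "\<dots> \<le> cmod (cinner (S x) x)" by (rule complex_Re_le_cmod)
  also have "\<dots> \<le> norm (S x) * norm x" by (rule cauchy_schwarz)
  finally have "(A * norm x) * norm x \<le> norm (S x) * norm x" by (simp add: power2_eq_square algebra_simps)
  then show ?thesis using False by simp
qed

lemma P_inj: "inj S"
proof (rule injI)
  fix x y assume "S x = S y"
  then have "S (x - y) = 0" by (simp add: linear_simps(2)[OF P_bl])
  then have "A * norm (x - y) \<le> 0" using P_below[of "x - y"] by simp
  then show "x = y" using P_A by (simp add: mult_le_0_iff)
qed

lemma P_selfadj: "cinner (S f) g = cnj (cinner (S g) f)"
proof -
  define a where "a = cinner (S f) g"
  define b where "b = cinner (S g) f"
  have "Im (cinner (S (f + g)) (f + g)) = 0" by (rule P_Im)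
  then have "Im (cinner (S f) f + cinner (S g) g + a + b) = 0"
    by (simp add: a_def b_def bcl_add[OF P_bcl] cinner_add_left cinner_add_right algebra_simps)
  then have 1: "Im a + Im b = 0" using P_Im[of f] P_Im[of g] by simp
  have "Im (cinner (S (f + scaleC \<i> g)) (f + scaleC \<i> g)) = 0" by (rule P_Im)
  then have "Im (cinner (S f) f + cinner (S g) g - \<i> * a + \<i> * b) = 0"
    by (simp add: a_def b_def bcl_add[OF P_bcl] bcl_scaleC[OF P_bcl] cinner_add_left cinner_add_right
        cinner_scaleC_left cinner_scaleC_right algebra_simps)
  then have 2: "Re b - Re a = 0" using P_Im[of f] P_Im[of g] by simp
  show ?thesis unfolding a_def[symmetric] b_def[symmetric] using 1 2 by (simp add: complex_eq_iff)
qed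

lemma P_range_closed: "closed (range S)"
  unfolding closed_sequential_limits
proof (intro allI impI)
  fix s l assume sl: "(\<forall>n. s n \<in> range S) \<and> s \<longlonglongrightarrow> l"
  then have s: "\<forall>n. s n \<in> range S" and l: "s \<longlonglongrightarrow> l" by auto
  have "\<forall>n. \<exists>y. s n = S y" using s by blast
  from choice[OF this] obtain x where x0: "\<forall>n. s n = S (x n)" by blast
  then have x: "\<And>n. s n = S (x n)" by blast
  have "Cauchy x"
  proof (rule CauchyI)
    fix e :: real assume e: "0 < e"
    have "Cauchy s" using l by (rule LIMSEQ_imp_Cauchy)
    then obtain N where N: "\<forall>m\<ge>N. \<forall>n\<ge>N. norm (s m - s n) < A * e"
      using CauchyD[of s "A * e"] e P_A by auto
    show "\<exists>N. \<forall>m\<ge>N. \<forall>n\<ge>N. norm (x m - x n) < e"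
    proof (intro exI allI impI)
      fix m n assume "N \<le> m" "N \<le> n"
      then have "norm (S (x m - x n)) < A * e" using N x by (simp add: linear_simps(2)[OF P_bl])
      then have "A * norm (x m - x n) < A * e" using P_below[of "x m - x n"] by linarith
      then show "norm (x m - x n) < e" using P_A by simp
    qed
  qed
  then obtain y where y: "x \<longlonglongrightarrow> y" using Cauchy_convergent_iff convergent_def by blast
  have "(\<lambda>n. S (x n)) \<longlonglongrightarrow> S y" by (rule bounded_linear.tendsto[OF P_bl y])
  moreover have "s = (\<lambda>n. S (x n))" using x by (simp add: fun_eq_iff)
  ultimately have "s \<longlonglongrightarrow> S y" by simp
  then have "l = S y" using l LIMSEQ_unique by blast
  then show "l \<in> range S" by simp
qed

lemma P_range_csub: "closed_csubspace (range S)"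
  unfolding closed_csubspace_def
proof (intro conjI ballI allI)
  show "closed (range S)" by (rule P_range_closed)
  have "S 0 \<in> range S" by (rule rangeI)
  then show "0 \<in> range S" using linear_simps(3)[OF P_bl] by simp
  show "x + y \<in> range S" if "x \<in> range S" "y \<in> range S" for x y
  proof -
    from that obtain a b where "x = S a" "y = S b" by auto
    then have "x + y = S (a + b)" using bcl_add[OF P_bcl] by simp
    then show ?thesis by simp
  qed
  show "scaleC c x \<in> range S" if "x \<in> range S" for c x
  proof -
    from that obtain a where "x = S a" by auto
    then have "scaleC c x = S (scaleC c a)" using bcl_scaleC[OF P_bcl] by simp
    then show ?thesis by simp
  qed
qed

lemma P_surj: "surj S"
proof -
  have "g \<in> range S" for g
  proof -
    define p where "p = proj (range S) g"
    have pR: "p \<in> range S" and orth: "\<forall>m\<in>range S. cinner (g - p) m = 0"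
      using proj_props[OF P_range_csub] p_def by auto
    have "cinner (g - p) (S (g - p)) = 0" using orth by simp
    then have "cinner (S (g - p)) (g - p) = 0" using cinner_commute[of "S (g - p)" "g - p"] by simp
    then have "A * (norm (g - p))\<^sup>2 \<le> 0" using P_low[of "g - p"] by simp
    then have "g - p = 0" using P_A by (simp add: mult_le_0_iff)
    then show ?thesis using pR by simp
  qed
  then show ?thesis by auto
qed

lemma P_bij: "bij S" using P_inj P_surj by (simp add: bij_def)

lemma P_inv: "S (inv S f) = f" using P_surj by (simp add: surj_f_inv_f)
lemma P_inv2: "inv S (S f) = f" using P_inj by simp

lemma P_inv_norm: "A * norm (inv S f) \<le> norm f"
  using P_below[of "inv S f"] by (simp add: P_inv)

lemma P_inv_diff: "inv S g - inv S q = inv S (g - q)"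
proof -
  have "S (inv S g - inv S q) = g - q" by (simp add: linear_simps(2)[OF P_bl] P_inv)
  then have "inv S (S (inv S g - inv S q)) = inv S (g - q)" by simp
  then show ?thesis by (simp only: P_inv2)
qed

lemma P_inv_selfadj: "cinner (inv S a) b = cinner a (inv S b)"
proof -
  have "cinner a (inv S b) = cinner (S (inv S a)) (inv S b)" by (simp add: P_inv)
  also have "\<dots> = cnj (cinner (S (inv S b)) (inv S a))" by (rule P_selfadj)
  also have "\<dots> = cinner (inv S a) b" using cinner_commute[of "inv S a" b] by (simp add: P_inv)
  finally show ?thesis by simp
qed

lemma P_vimage_csub:
  assumes N: "closed_csubspace N" shows "closed_csubspace (inv S ` N)"
proof -
  have eq: "inv S ` N = S -` N" by (rule bij_vimage_eq_inv_image[OF P_bij, symmetric])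
  show ?thesis unfolding eq closed_csubspace_def
  proof (intro conjI ballI allI)
    show "closed (S -` N)"
      using N by (intro continuous_closed_vimage linear_continuous_at P_bl) (simp add: closed_csubspace_def)
    show "0 \<in> S -` N" using N linear_simps(3)[OF P_bl] by (simp add: closed_csubspace_def)
    show "x + y \<in> S -` N" if "x \<in> S -` N" "y \<in> S -` N" for x y
      using that N bcl_add[OF P_bcl] by (simp add: csub_add)
    show "scaleC c x \<in> S -` N" if "x \<in> S -` N" for c x
      using that N bcl_scaleC[OF P_bcl] by (simp add: csub_scaleC)
  qed
qed

lemma P_proj_dual:
  assumes N: "closed_csubspace N"
  shows "proj N (inv S (proj (inv S ` N) g)) = proj N (inv S g)"
proof -
  define q where "q = proj (inv S ` N) g"
  have orth: "\<forall>m\<in>inv S ` N. cinner (g - q) m = 0"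
    using proj_props(2)[OF P_vimage_csub[OF N]] q_def by blast
  have key: "cinner (inv S g - y) m = cinner (inv S q - y) m" if "m \<in> N" for y m
  proof -
    have "cinner (inv S g - y) m - cinner (inv S q - y) m = cinner (inv S g - inv S q) m"
      by (simp add: cinner_diff_left)
    also have "\<dots> = cinner (g - q) (inv S m)" by (simp add: P_inv_diff P_inv_selfadj)
    also have "\<dots> = 0" using orth that by blast
    finally show ?thesis by simp
  qed
  have eq: "(\<lambda>y. y \<in> N \<and> (\<forall>m\<in>N. cinner (inv S q - y) m = 0))
      = (\<lambda>y. y \<in> N \<and> (\<forall>m\<in>N. cinner (inv S g - y) m = 0))"
    using key by (auto simp: fun_eq_iff)
  have "proj N (inv S q) = proj N (inv S g)"
    unfolding proj_def by (simp only: eq)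
  then show ?thesis by (simp add: q_def)
qed

end

lemma sesq_bound:
  fixes S S' :: "'a::complex_hilbert \<Rightarrow> 'a"
  assumes P1: "posop S A1" and P2: "posop S' A2" and D0: "0 \<le> D"
    and D: "\<And>x. cmod (cinner (S x) x - cinner (S' x) x) \<le> D * (norm x)\<^sup>2"
  shows "cmod (cinner (S a) b - cinner (S' a) b) \<le> D * norm a * norm b"
proof -
  define B where "B x y = cinner (S x) y - cinner (S' x) y" for x y
  have lin1: "bounded_linear S" "bounded_linear S'" using P_bl[OF P1] P_bl[OF P2] .
  have Bherm: "B y x = cnj (B x y)" for x y
    unfolding B_def using P_selfadj[OF P1, of y x] P_selfadj[OF P2, of y x] by simp
  have Badd1: "B (x + y) z = B x z + B y z" for x y z
    unfolding B_def by (simp add: linear_simps(1)[OF lin1(1)] linear_simps(1)[OF lin1(2)] cinner_add_left)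
  have Bdiff1: "B (x - y) z = B x z - B y z" for x y z
    unfolding B_def by (simp add: linear_simps(2)[OF lin1(1)] linear_simps(2)[OF lin1(2)] cinner_diff_left)
  have Badd2: "B z (x + y) = B z x + B z y" for x y z
    unfolding B_def by (simp add: cinner_add_right)
  have Bdiff2: "B z (x - y) = B z x - B z y" for x y z
    unfolding B_def by (simp add: cinner_diff_right)
  have BscC: "B (scaleC c x) y = c * B x y" for c x y
    unfolding B_def by (simp add: bcl_scaleC[OF P_bcl[OF P1]] bcl_scaleC[OF P_bcl[OF P2]]
        cinner_scaleC_left right_diff_distrib)
  have BscR1: "B (r *\<^sub>R x) y = of_real r * B x y" for r x y
    using BscC[of "complex_of_real r" x y] by (simp add: scaleC_of_real)
  have BscR2: "B x (r *\<^sub>R y) = of_real r * B x y" for r x y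
    unfolding B_def by (simp add: cinner_scaleR_right right_diff_distrib)
  have polar: "4 * Re (B x y) \<le> 2 * D * ((norm x)\<^sup>2 + (norm y)\<^sup>2)" for x y
  proof -
    have e: "B (x + y) (x + y) - B (x - y) (x - y) = 2 * (B x y + B y x)"
      by (simp add: Badd1 Badd2 Bdiff1 Bdiff2)
    have "Re (B x y + B y x) = 2 * Re (B x y)" using Bherm[of x y] by simp
    then have "4 * Re (B x y) = Re (B (x + y) (x + y)) - Re (B (x - y) (x - y))"
      using arg_cong[OF e, of Re] by simp
    also have "\<dots> \<le> cmod (B (x + y) (x + y)) + cmod (B (x - y) (x - y))"
      using complex_Re_le_cmod[of "B (x + y) (x + y)"] abs_Re_le_cmod[of "B (x - y) (x - y)"] by linarith
    also have "\<dots> \<le> D * (norm (x + y))\<^sup>2 + D * (norm (x - y))\<^sup>2"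
      using D[of "x + y"] D[of "x - y"] unfolding B_def by linarith
    also have "\<dots> = D * ((norm (x + y))\<^sup>2 + (norm (x - y))\<^sup>2)" by (simp add: distrib_left)
    also have "\<dots> = D * (2 * (norm x)\<^sup>2 + 2 * (norm y)\<^sup>2)" by (simp only: parallelogram)
    also have "\<dots> = 2 * D * ((norm x)\<^sup>2 + (norm y)\<^sup>2)" by (simp add: algebra_simps)
    finally show ?thesis .
  qed
  define c where "c = B a b"
  show ?thesis
  proof (cases "c = 0 \<or> a = 0 \<or> b = 0")
    case True
    then have "c = 0" unfolding c_def B_def
      using linear_simps(3)[OF lin1(1)] linear_simps(3)[OF lin1(2)] by auto
    then show ?thesis using D0 by (simp add: c_def B_def)
  next
    case False
    then have c0: "c \<noteq> 0" and a0: "a \<noteq> 0" and b0: "b \<noteq> 0" by auto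
    define w where "w = cnj c / of_real (cmod c)"
    have wc: "w * c = of_real (cmod c)"
      unfolding w_def using c0 by (simp add: complex_norm_square[symmetric] power2_eq_square field_simps)
    have ww: "w * cnj w = 1"
      unfolding w_def using c0 by (simp add: complex_norm_square[symmetric] power2_eq_square field_simps)
    define a' where "a' = scaleC w a"
    have na': "norm a' = norm a"
    proof -
      have "(norm a')\<^sup>2 = Re (w * cnj w * cinner a a)"
        unfolding a'_def norm_sq_cinner cinner_scaleC_left cinner_scaleC_right by (simp only: mult.assoc mult.left_commute)
      also have "\<dots> = (norm a)\<^sup>2" using ww by (simp add: norm_sq_cinner)
      finally show ?thesis by (simp add: power2_eq_iff_nonneg)
    qed
    define x where "x = norm b *\<^sub>R a'"
    define y where "y = norm a *\<^sub>R b"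
    have "B x y = of_real (norm b * norm a * cmod c)"
      unfolding x_def y_def a'_def by (simp add: BscR1 BscR2 BscC c_def[symmetric] wc)
    then have "4 * (norm b * norm a * cmod c) \<le> 2 * D * ((norm x)\<^sup>2 + (norm y)\<^sup>2)"
      using polar[of x y] by simp
    also have "(norm x)\<^sup>2 + (norm y)\<^sup>2 = 2 * (norm a * norm b) * (norm a * norm b)"
      unfolding x_def y_def by (simp add: na' power2_eq_square)
    finally have "(norm a * norm b) * cmod c \<le> (norm a * norm b) * (D * norm a * norm b)"
      by (simp add: algebra_simps)
    then have "cmod c \<le> D * norm a * norm b"
      using a0 b0 by (simp add: mult_le_cancel_left_pos)
    then show ?thesis by (simp add: c_def B_def)
  qed
qed

lemma final_ineq:
  fixes S S' :: "'a::complex_hilbert \<Rightarrow> 'a"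
  assumes P1: "posop S A1" and P2: "posop S' A2" and D0: "0 \<le> D"
    and D: "\<And>x. cmod (cinner (S x) x - cinner (S' x) x) \<le> D * (norm x)\<^sup>2"
  shows "cmod (cinner f (inv S f) - cinner f (inv S' f)) \<le> D / (A1 * A2) * (norm f)\<^sup>2"
proof -
  define a where "a = inv S f"
  define b where "b = inv S' f"
  have Sa: "S a = f" and Sb: "S' b = f" using P_inv[OF P1] P_inv[OF P2] a_def b_def by auto
  have "cinner f a = cinner a f" using P_inv_selfadj[OF P1, of f f] a_def by simp
  also have "\<dots> = cinner a (S' b)" by (simp add: Sb)
  also have "\<dots> = cnj (cinner (S' b) a)" by (rule cinner_commute)
  also have "\<dots> = cinner (S' a) b" using P_selfadj[OF P2, of b a] by simp
  finally have fa: "cinner f a = cinner (S' a) b" .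
  have fb: "cinner f b = cinner (S a) b" by (simp add: Sa)
  have "cmod (cinner f a - cinner f b) = cmod (cinner (S a) b - cinner (S' a) b)"
    unfolding fa fb by (simp add: norm_minus_commute)
  also have "\<dots> \<le> D * norm a * norm b" by (rule sesq_bound[OF P1 P2 D0 D])
  also have "\<dots> \<le> D * (norm f / A1) * (norm f / A2)"
  proof -
    have A1: "A1 > 0" and A2: "A2 > 0" using P_A[OF P1] P_A[OF P2] .
    have "norm a \<le> norm f / A1" using P_inv_norm[OF P1, of f] A1 a_def by (simp add: field_simps)
    moreover have "norm b \<le> norm f / A2" using P_inv_norm[OF P2, of f] A2 b_def by (simp add: field_simps)
    ultimately have "norm a * norm b \<le> (norm f / A1) * (norm f / A2)"
      using A1 A2 by (intro mult_mono) auto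
    then have "D * (norm a * norm b) \<le> D * ((norm f / A1) * (norm f / A2))"
      using D0 by (rule mult_left_mono)
    then show ?thesis by (simp add: mult.assoc)
  qed
  also have "\<dots> = D / (A1 * A2) * (norm f)\<^sup>2" by (simp add: power2_eq_square)
  finally show ?thesis by (simp add: a_def b_def)
qed


lemma frame_posop:
  assumes frame: "ctrl_gfusion_frame M v F \<Lambda> T U A B"
    and op: "ctrl_frame_operator M v F \<Lambda> T U S"
  shows "posop S A"
    and "\<And>f. integrable M (\<lambda>x. complex_of_real ((v x)\<^sup>2) *
                        cinner (\<Lambda> x (proj (F x) (U f))) (\<Lambda> x (proj (F x) (T f))))"
    and "\<And>f. cinner (S f) f = (LINT x|M. complex_of_real ((v x)\<^sup>2) *
                        cinner (\<Lambda> x (proj (F x) (U f))) (\<Lambda> x (proj (F x) (T f))))"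
proof -
  have bcl: "bounded_clinear S" using op by (simp add: ctrl_frame_operator_def)
  show eq: "cinner (S f) f = (LINT x|M. complex_of_real ((v x)\<^sup>2) *
                        cinner (\<Lambda> x (proj (F x) (U f))) (\<Lambda> x (proj (F x) (T f))))" for f
    using op by (simp add: ctrl_frame_operator_def)
  have fr: "integrable M (\<lambda>x. complex_of_real ((v x)\<^sup>2) *
                        cinner (\<Lambda> x (proj (F x) (U f))) (\<Lambda> x (proj (F x) (T f)))) \<and>
     Im (LINT x|M. complex_of_real ((v x)\<^sup>2) *
                        cinner (\<Lambda> x (proj (F x) (U f))) (\<Lambda> x (proj (F x) (T f)))) = 0 \<and>
     A * (norm f)\<^sup>2 \<le> Re (LINT x|M. complex_of_real ((v x)\<^sup>2) *
                        cinner (\<Lambda> x (proj (F x) (U f))) (\<Lambda> x (proj (F x) (T f))))" for f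
    using frame unfolding ctrl_gfusion_frame_def Let_def by blast
  show "integrable M (\<lambda>x. complex_of_real ((v x)\<^sup>2) *
                        cinner (\<Lambda> x (proj (F x) (U f))) (\<Lambda> x (proj (F x) (T f))))" for f
    using fr by blast
  have A: "0 < A" using frame by (simp add: ctrl_gfusion_frame_def)
  show "posop S A" unfolding posop_def using bcl A fr eq by simp
qed

theorem theorem4p2:
  fixes M :: "'x measure" and v :: "'x \<Rightarrow> real"
    and F G :: "'x \<Rightarrow> 'h::complex_hilbert set"
    and \<Lambda> \<Gamma> :: "'x \<Rightarrow> 'h \<Rightarrow> 'k::complex_hilbert"
    and T U SC SC' :: "'h \<Rightarrow> 'h"
    and A1 B1 A2 B2 D :: real
  assumes sep: "separable_space TYPE('h)"
    and TU: "GBplus T" "GBplus U"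
    and famF: "gfusion_family M v F \<Lambda>"
    and famG: "gfusion_family M v G \<Gamma>"
    and frameF: "ctrl_gfusion_frame M v F \<Lambda> T U A1 B1"
    and frameG: "ctrl_gfusion_frame M v G \<Gamma> T U A2 B2"
    and opF: "ctrl_frame_operator M v F \<Lambda> T U SC"
    and opG: "ctrl_frame_operator M v G \<Gamma> T U SC'"
    and commF: "inv SC \<circ> T = T \<circ> inv SC" "inv SC \<circ> U = U \<circ> inv SC"
    and commG: "inv SC' \<circ> T = T \<circ> inv SC'" "inv SC' \<circ> U = U \<circ> inv SC'"
    and Dpos: "0 < D"
    and hyp: "\<And>f. cmod (LINT x|M. complex_of_real ((v x)\<^sup>2) *
                 (cinner (\<Lambda> x (proj (F x) (U f))) (\<Lambda> x (proj (F x) (T f)))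
                  - cinner (\<Gamma> x (proj (G x) (U f))) (\<Gamma> x (proj (G x) (T f)))))
               \<le> D * (norm f)\<^sup>2"
  shows "\<And>f. cmod (LINT x|M. complex_of_real ((v x)\<^sup>2) *
                 (cinner (\<Lambda> x (proj (F x) (inv SC (proj (inv SC ` F x) (U f)))))
                         (\<Lambda> x (proj (F x) (inv SC (proj (inv SC ` F x) (T f)))))
                  - cinner (\<Gamma> x (proj (G x) (inv SC' (proj (inv SC' ` G x) (U f)))))
                         (\<Gamma> x (proj (G x) (inv SC' (proj (inv SC' ` G x) (T f)))))))
               \<le> D / (A1 * A2) * (norm f)\<^sup>2"
proof -
  define IF where "IF f = (\<lambda>x. complex_of_real ((v x)\<^sup>2) *
                        cinner (\<Lambda> x (proj (F x) (U f))) (\<Lambda> x (proj (F x) (T f))))" for f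
  define IG where "IG f = (\<lambda>x. complex_of_real ((v x)\<^sup>2) *
                        cinner (\<Gamma> x (proj (G x) (U f))) (\<Gamma> x (proj (G x) (T f))))" for f
  have PF: "posop SC A1" and intF: "\<And>f. integrable M (IF f)" and eqF: "\<And>f. cinner (SC f) f = integral\<^sup>L M (IF f)"
    using frame_posop[OF frameF opF] unfolding IF_def by auto
  have PG: "posop SC' A2" and intG: "\<And>f. integrable M (IG f)" and eqG: "\<And>f. cinner (SC' f) f = integral\<^sup>L M (IG f)"
    using frame_posop[OF frameG opG] unfolding IG_def by auto
  have split: "(LINT x|M. IF f x - IG g x) = cinner (SC f) f - cinner (SC' g) g" for f g
    using Bochner_Integration.integral_diff[OF intF intG] eqF eqG by simp
  have hyp': "cmod (cinner (SC x) x - cinner (SC' x) x) \<le> D * (norm x)\<^sup>2" for x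
  proof -
    have "(LINT y|M. complex_of_real ((v y)\<^sup>2) *
                 (cinner (\<Lambda> y (proj (F y) (U x))) (\<Lambda> y (proj (F y) (T x)))
                  - cinner (\<Gamma> y (proj (G y) (U x))) (\<Gamma> y (proj (G y) (T x)))))
        = (LINT y|M. IF x y - IG x y)"
      unfolding IF_def IG_def by (simp add: right_diff_distrib)
    then show ?thesis using hyp[of x] split[of x x] by simp
  qed
  have cF: "closed_csubspace (F y)" if "y \<in> space M" for y
    using famF that by (simp add: gfusion_family_def)
  have cG: "closed_csubspace (G y)" if "y \<in> space M" for y
    using famG that by (simp add: gfusion_family_def)
  have cmF: "inv SC (T f) = T (inv SC f)" "inv SC (U f) = U (inv SC f)" for f
    using fun_cong[OF commF(1), of f] fun_cong[OF commF(2), of f] by auto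
  have cmG: "inv SC' (T f) = T (inv SC' f)" "inv SC' (U f) = U (inv SC' f)" for f
    using fun_cong[OF commG(1), of f] fun_cong[OF commG(2), of f] by auto
  fix f
  have "(LINT x|M. complex_of_real ((v x)\<^sup>2) *
                 (cinner (\<Lambda> x (proj (F x) (inv SC (proj (inv SC ` F x) (U f)))))
                         (\<Lambda> x (proj (F x) (inv SC (proj (inv SC ` F x) (T f)))))
                  - cinner (\<Gamma> x (proj (G x) (inv SC' (proj (inv SC' ` G x) (U f)))))
                         (\<Gamma> x (proj (G x) (inv SC' (proj (inv SC' ` G x) (T f)))))))
      = (LINT x|M. IF (inv SC f) x - IG (inv SC' f) x)"
  proof (rule Bochner_Integration.integral_cong[OF refl])
    fix x assume x: "x \<in> space M"
    show "complex_of_real ((v x)\<^sup>2) *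
                 (cinner (\<Lambda> x (proj (F x) (inv SC (proj (inv SC ` F x) (U f)))))
                         (\<Lambda> x (proj (F x) (inv SC (proj (inv SC ` F x) (T f)))))
                  - cinner (\<Gamma> x (proj (G x) (inv SC' (proj (inv SC' ` G x) (U f)))))
                         (\<Gamma> x (proj (G x) (inv SC' (proj (inv SC' ` G x) (T f))))))
         = IF (inv SC f) x - IG (inv SC' f) x"
      unfolding IF_def IG_def P_proj_dual[OF PF cF[OF x]] P_proj_dual[OF PG cG[OF x]] cmF cmG
      by (simp add: right_diff_distrib)
  qed
  also have "\<dots> = cinner (SC (inv SC f)) (inv SC f) - cinner (SC' (inv SC' f)) (inv SC' f)"
    by (rule split)
  also have "\<dots> = cinner f (inv SC f) - cinner f (inv SC' f)"
    by (simp add: P_inv[OF PF] P_inv[OF PG])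
  finally show "cmod (LINT x|M. complex_of_real ((v x)\<^sup>2) *
                 (cinner (\<Lambda> x (proj (F x) (inv SC (proj (inv SC ` F x) (U f)))))
                         (\<Lambda> x (proj (F x) (inv SC (proj (inv SC ` F x) (T f)))))
                  - cinner (\<Gamma> x (proj (G x) (inv SC' (proj (inv SC' ` G x) (U f)))))
                         (\<Gamma> x (proj (G x) (inv SC' (proj (inv SC' ` G x) (T f)))))))
               \<le> D / (A1 * A2) * (norm f)\<^sup>2"
    using final_ineq[OF PF PG _ hyp'] Dpos by simp
qed

end
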